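(* For every fixed integer $k\ge1$, as formal power series in $y$, \[ \sum_{n\ge0}d^-_{n,k}y^n=\frac{y^{2k}(2-y)}{(1-y)^{k+1}}+y\,\delta_{k1}, \] where $\delta$ is the Kronecker delta.
   Context: For $n\ge1$ let $\Xi_n$ be the poset on $\{x_1,\dots,x_n\}$ whose cover relations are exactly: $x_2\prec x_1$, $x_3\prec x_2$, and for $3\le i\le n-1$, $x_i\prec x_{i+1}$ if $i$ is odd and $x_{i+1}\prec x_i$ if $i$ is even (so $x_1>x_2>x_3<x_4>x_5<\cdots$). A filter of a poset is an up-closed subset. $\Omega_n$ is the lattice of filters of $\Xi_n$ ordered by reverse inclusion; $\Omega_0$ is the one-element lattice. $d^-_{n,k}$ is the number of elements of $\Omega_n$ that are covered by exactly $k$ elements of $\Omega_n$ (equivalently, the number of $k$-element antichains of $\Xi_n$), and $d^-_{n,k}=0$ if there are none. *)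

theory Defs
  imports "HOL-Computational_Algebra.Formal_Power_Series"
begin

text \<open>The poset Xi_n on the ground set {1..n} (x_i represented by i).
  A pair (a,b) in xi_cover n means x_a \<prec> x_b is a cover relation.\<close>
definition xi_cover :: "nat \<Rightarrow> (nat \<times> nat) set" where
  "xi_cover n = {(a,b). a \<in> {1..n} \<and> b \<in> {1..n} \<and>
     ((a = 2 \<and> b = 1) \<or> (a = 3 \<and> b = 2) \<or>
      (\<exists>i. 3 \<le> i \<and> i \<le> n - 1 \<and>
         ((odd i \<and> a = i \<and> b = i + 1) \<or> (even i \<and> a = i + 1 \<and> b = i))))}"

definition xi_le :: "nat \<Rightarrow> nat \<Rightarrow> nat \<Rightarrow> bool" where
  "xi_le n x y \<longleftrightarrow> x \<in> {1..n} \<and> y \<in> {1..n} \<and> (x, y) \<in> (xi_cover n)\<^sup>*"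

definition xi_filter :: "nat \<Rightarrow> nat set \<Rightarrow> bool" where
  "xi_filter n F \<longleftrightarrow> F \<subseteq> {1..n} \<and> (\<forall>x\<in>F. \<forall>y. xi_le n x y \<longrightarrow> y \<in> F)"

text \<open>Omega_n: the set of filters, ordered by reverse inclusion (F \<le> G iff G \<subseteq> F).\<close>
definition Omega :: "nat \<Rightarrow> nat set set" where
  "Omega n = {F. xi_filter n F}"

definition omega_covers :: "nat \<Rightarrow> nat set \<Rightarrow> nat set \<Rightarrow> bool" where
  "omega_covers n G F \<longleftrightarrow> F \<in> Omega n \<and> G \<in> Omega n \<and> G \<subset> F \<and>
     \<not> (\<exists>H \<in> Omega n. G \<subset> H \<and> H \<subset> F)"

definition dminus :: "nat \<Rightarrow> nat \<Rightarrow> nat" where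
  "dminus n k = card {F \<in> Omega n. card {G. omega_covers n G F} = k}"

end

theory Submission
  imports Defs
begin


lemma cover_iff:
  "(a,b) \<in> xi_cover n \<longleftrightarrow> a \<in> {1..n} \<and> b \<in> {1..n} \<and>
     ((a = 2 \<and> b = 1) \<or> (a = 3 \<and> b = 2) \<or> (odd a \<and> a \<ge> 3 \<and> b = a + 1) \<or> (odd a \<and> a \<ge> 5 \<and> b + 1 = a))"
proof
  assume "(a,b) \<in> xi_cover n"
  then show "a \<in> {1..n} \<and> b \<in> {1..n} \<and>
     ((a = 2 \<and> b = 1) \<or> (a = 3 \<and> b = 2) \<or> (odd a \<and> a \<ge> 3 \<and> b = a + 1) \<or> (odd a \<and> a \<ge> 5 \<and> b + 1 = a))"
    unfolding xi_cover_def by auto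
next
  assume h: "a \<in> {1..n} \<and> b \<in> {1..n} \<and>
     ((a = 2 \<and> b = 1) \<or> (a = 3 \<and> b = 2) \<or> (odd a \<and> a \<ge> 3 \<and> b = a + 1) \<or> (odd a \<and> a \<ge> 5 \<and> b + 1 = a))"
  then consider "a = 2 \<and> b = 1" | "a = 3 \<and> b = 2" | "odd a \<and> a \<ge> 3 \<and> b = a + 1" | "odd a \<and> a \<ge> 5 \<and> b + 1 = a" by blast
  then show "(a,b) \<in> xi_cover n"
  proof cases
    case 3 then show ?thesis using h unfolding xi_cover_def by auto
  next
    case 4 then show ?thesis using h unfolding xi_cover_def
      apply auto apply (rule exI[of _ "a - 1"]) by auto
  qed (use h in \<open>auto simp: xi_cover_def\<close>)
qed

lemma xi_le_iff:
  "xi_le n x y \<longleftrightarrow> x \<in> {1..n} \<and> y \<in> {1..n} \<and> (x = y \<or> (x,y) \<in> xi_cover n \<or> (x = 3 \<and> y = 1))"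
proof -
  have A: "(x, y) \<in> (xi_cover n)\<^sup>* \<Longrightarrow> x = y \<or> (x,y) \<in> xi_cover n \<or> (x = 3 \<and> y = 1)"
  proof (induction rule: rtrancl_induct)
    case base then show ?case by simp
  next
    case (step y z)
    then show ?case by (auto simp: cover_iff)
  qed
  have B: "(3::nat, 1) \<in> (xi_cover n)\<^sup>*" if "3 \<le> n"
  proof -
    have "(3, 2) \<in> xi_cover n" "(2, 1) \<in> xi_cover n" using that by (auto simp: cover_iff)
    then show ?thesis by (meson converse_rtrancl_into_rtrancl r_into_rtrancl)
  qed
  show ?thesis unfolding xi_le_def using A B by auto
qed


definition rk :: "nat \<Rightarrow> nat" where
  "rk x = (if x = 1 then 2 else if x = 2 then 1 else if even x then 1 else 0)"

lemma xi_le_rk: "xi_le n x y \<Longrightarrow> x \<noteq> y \<Longrightarrow> rk x < rk y"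
  by (auto simp: xi_le_iff cover_iff rk_def)

lemma xi_le_refl: "x \<in> {1..n} \<Longrightarrow> xi_le n x x"
  by (simp add: xi_le_def)

lemma xi_le_trans: "xi_le n x y \<Longrightarrow> xi_le n y z \<Longrightarrow> xi_le n x z"
  unfolding xi_le_def by (meson rtrancl_trans)

lemma xi_le_antisym: "xi_le n x y \<Longrightarrow> xi_le n y x \<Longrightarrow> x = y"
  using xi_le_rk[of n x y] xi_le_rk[of n y x] by (cases "x = y") auto

lemma xi_le_dom: "xi_le n x y \<Longrightarrow> x \<in> {1..n} \<and> y \<in> {1..n}"
  by (simp add: xi_le_def)

definition minset :: "nat \<Rightarrow> nat set \<Rightarrow> nat set" where
  "minset n F = {m \<in> F. \<forall>y\<in>F. xi_le n y m \<longrightarrow> y = m}"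

lemma exists_min_below:
  assumes "x \<in> F" "F \<subseteq> {1..n}"
  shows "\<exists>m \<in> minset n F. xi_le n m x"
proof -
  have "xi_le n x x" using assms xi_le_refl by blast
  then obtain m where m: "m \<in> F \<and> xi_le n m x" and ml: "\<forall>y. y \<in> F \<and> xi_le n y x \<longrightarrow> rk m \<le> rk y"
    using ex_has_least_nat[of "\<lambda>y. y \<in> F \<and> xi_le n y x" x rk] assms by blast
  have "m \<in> minset n F"
    unfolding minset_def
  proof (safe)
    show "m \<in> F" using m by blast
  next
    fix y assume "y \<in> F" "xi_le n y m"
    then have "xi_le n y x" using m xi_le_trans by blast
    then have "rk m \<le> rk y" using ml \<open>y \<in> F\<close> by blast
    then show "y = m" using xi_le_rk[OF \<open>xi_le n y m\<close>] by fastforce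
  qed
  then show ?thesis using m by blast
qed

lemma minset_sub: "minset n F \<subseteq> F" by (auto simp: minset_def)

lemma remove_min_filter:
  assumes "xi_filter n F" "m \<in> minset n F"
  shows "xi_filter n (F - {m})"
  using assms unfolding xi_filter_def minset_def by blast

lemma covers_iff:
  assumes F: "F \<in> Omega n"
  shows "omega_covers n G F \<longleftrightarrow> (\<exists>m \<in> minset n F. G = F - {m})"
proof
  assume c: "omega_covers n G F"
  then have G: "xi_filter n G" and GF: "G \<subset> F" and nb: "\<not> (\<exists>H \<in> Omega n. G \<subset> H \<and> H \<subset> F)"
    by (auto simp: omega_covers_def Omega_def)
  have Ff: "xi_filter n F" using F by (simp add: Omega_def)
  obtain x where x: "x \<in> F" "x \<notin> G" using GF by blast
  obtain m where m: "m \<in> minset n F" "xi_le n m x"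
    using exists_min_below[OF x(1), of n] Ff by (auto simp: xi_filter_def)
  have "m \<notin> G" using G m x unfolding xi_filter_def by blast
  then have "G \<subseteq> F - {m}" using GF by blast
  moreover have "F - {m} \<subset> F" using m minset_sub by blast
  moreover have "F - {m} \<in> Omega n" using remove_min_filter[OF Ff m(1)] by (simp add: Omega_def)
  ultimately have "G = F - {m}" using nb by blast
  then show "\<exists>m \<in> minset n F. G = F - {m}" using m by blast
next
  assume "\<exists>m \<in> minset n F. G = F - {m}"
  then obtain m where m: "m \<in> minset n F" "G = F - {m}" by blast
  have Ff: "xi_filter n F" using F by (simp add: Omega_def)
  have "G \<in> Omega n" using remove_min_filter[OF Ff m(1)] m(2) by (simp add: Omega_def)
  moreover have "G \<subset> F" using m minset_sub by blast
  moreover have "\<not> (\<exists>H \<in> Omega n. G \<subset> H \<and> H \<subset> F)" using m by blast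
  ultimately show "omega_covers n G F" using F by (simp add: omega_covers_def)
qed

lemma card_covers:
  assumes F: "F \<in> Omega n"
  shows "card {G. omega_covers n G F} = card (minset n F)"
proof -
  have "{G. omega_covers n G F} = (\<lambda>m. F - {m}) ` minset n F"
    using covers_iff[OF F] by blast
  moreover have "inj_on (\<lambda>m. F - {m}) (minset n F)"
    using minset_sub unfolding inj_on_def by blast
  ultimately show ?thesis by (simp add: card_image)
qed

definition antichain :: "nat \<Rightarrow> nat set \<Rightarrow> bool" where
  "antichain n S \<longleftrightarrow> S \<subseteq> {1..n} \<and> (\<forall>x\<in>S. \<forall>y\<in>S. xi_le n x y \<longrightarrow> x = y)"

definition upset :: "nat \<Rightarrow> nat set \<Rightarrow> nat set" where
  "upset n S = {y. \<exists>x\<in>S. xi_le n x y}"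

lemma minset_antichain: "xi_filter n F \<Longrightarrow> antichain n (minset n F)"
  unfolding antichain_def minset_def xi_filter_def by blast

lemma upset_minset: assumes "xi_filter n F" shows "upset n (minset n F) = F"
proof
  show "upset n (minset n F) \<subseteq> F" using assms unfolding upset_def minset_def xi_filter_def by blast
  show "F \<subseteq> upset n (minset n F)"
    using exists_min_below assms unfolding upset_def xi_filter_def by blast
qed

lemma upset_filter: "antichain n S \<Longrightarrow> xi_filter n (upset n S)"
  unfolding antichain_def upset_def xi_filter_def using xi_le_trans xi_le_dom by blast

lemma minset_upset: assumes "antichain n S" shows "minset n (upset n S) = S"
proof
  show "minset n (upset n S) \<subseteq> S"
  proof
    fix m assume "m \<in> minset n (upset n S)"
    then obtain x where x: "x \<in> S" "xi_le n x m" and mm: "\<forall>y\<in>upset n S. xi_le n y m \<longrightarrow> y = m"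
      unfolding minset_def upset_def by blast
    have "x \<in> upset n S" using x assms xi_le_refl unfolding upset_def antichain_def by blast
    then show "m \<in> S" using mm x by blast
  qed
  show "S \<subseteq> minset n (upset n S)"
  proof
    fix s assume s: "s \<in> S"
    have "s \<in> upset n S" using s assms xi_le_refl unfolding upset_def antichain_def by blast
    moreover have "\<forall>y\<in>upset n S. xi_le n y s \<longrightarrow> y = s"
      using assms s xi_le_trans xi_le_antisym unfolding upset_def antichain_def by blast
    ultimately show "s \<in> minset n (upset n S)" unfolding minset_def by blast
  qed
qed

lemma dminus_antichain: "dminus n k = card {S. antichain n S \<and> card S = k}"
proof -
  have "dminus n k = card {F \<in> Omega n. card (minset n F) = k}"
    unfolding dminus_def using card_covers by (metis (mono_tags, lifting) Collect_cong)
  also have "{S. antichain n S \<and> card S = k} = minset n ` {F \<in> Omega n. card (minset n F) = k}"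
  proof
    show "minset n ` {F \<in> Omega n. card (minset n F) = k} \<subseteq> {S. antichain n S \<and> card S = k}"
      using minset_antichain by (auto simp: Omega_def)
    show "{S. antichain n S \<and> card S = k} \<subseteq> minset n ` {F \<in> Omega n. card (minset n F) = k}"
    proof
      fix S assume S: "S \<in> {S. antichain n S \<and> card S = k}"
      then have "S = minset n (upset n S)" "upset n S \<in> Omega n"
        using minset_upset upset_filter by (auto simp: Omega_def)
      then show "S \<in> minset n ` {F \<in> Omega n. card (minset n F) = k}" using S by force
    qed
  qed
  moreover have "inj_on (minset n) {F \<in> Omega n. card (minset n F) = k}"
    unfolding inj_on_def Omega_def using upset_minset by (metis mem_Collect_eq)
  ultimately show ?thesis by (simp add: card_image)
qed




definition indep :: "nat \<Rightarrow> nat set \<Rightarrow> bool" where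
  "indep n S \<longleftrightarrow> S \<subseteq> {1..n} \<and> (\<forall>i. \<not> (i \<in> S \<and> Suc i \<in> S)) \<and> \<not> (1 \<in> S \<and> 3 \<in> S)"

lemma cmp_dir1: "xi_le n x y \<Longrightarrow> x \<noteq> y \<Longrightarrow> y = Suc x \<or> x = Suc y \<or> (x = 3 \<and> y = 1)"
proof -
  assume a: "xi_le n x y" "x \<noteq> y"
  then have "(x,y) \<in> xi_cover n \<or> (x = 3 \<and> y = 1)" by (simp add: xi_le_iff)
  then show ?thesis unfolding cover_iff by auto
qed

lemma consec: assumes "a \<in> {1..n}" "Suc a \<in> {1..n}" shows "xi_le n a (Suc a) \<or> xi_le n (Suc a) a"
proof -
  have "a \<ge> 1" using assms by simp
  then have "a = 1 \<or> a = 2 \<or> (odd a \<and> a \<ge> 3) \<or> (even a \<and> a \<ge> 4)" by presburger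
  then consider "a = 1" | "a = 2" | "odd a \<and> a \<ge> 3" | "even a \<and> a \<ge> 4" by blast
  then show ?thesis
  proof cases
    case 1 then have "(Suc a, a) \<in> xi_cover n" using assms by (simp add: cover_iff)
    then show ?thesis using assms by (simp add: xi_le_iff)
  next
    case 2 then have "(Suc a, a) \<in> xi_cover n" using assms by (simp add: cover_iff)
    then show ?thesis using assms by (simp add: xi_le_iff)
  next
    case 3 then have "(a, Suc a) \<in> xi_cover n" using assms by (simp add: cover_iff)
    then show ?thesis using assms by (simp add: xi_le_iff)
  next
    case 4 then have "(Suc a, a) \<in> xi_cover n" using assms by (simp add: cover_iff)
    then show ?thesis using assms by (simp add: xi_le_iff)
  qed
qed

lemma comparable_iff:
  assumes "x \<in> {1..n}" "y \<in> {1..n}"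
  shows "(x \<noteq> y \<and> (xi_le n x y \<or> xi_le n y x)) \<longleftrightarrow> (y = Suc x \<or> x = Suc y \<or> (x = 1 \<and> y = 3) \<or> (x = 3 \<and> y = 1))"
proof
  assume "x \<noteq> y \<and> (xi_le n x y \<or> xi_le n y x)"
  then show "y = Suc x \<or> x = Suc y \<or> (x = 1 \<and> y = 3) \<or> (x = 3 \<and> y = 1)"
    using cmp_dir1[of n x y] cmp_dir1[of n y x] by auto
next
  have c13: "xi_le n 3 1" if "3 \<le> n" using that xi_le_iff by auto
  assume "y = Suc x \<or> x = Suc y \<or> (x = 1 \<and> y = 3) \<or> (x = 3 \<and> y = 1)"
  then show "x \<noteq> y \<and> (xi_le n x y \<or> xi_le n y x)"
    using consec[of x n] consec[of y n] c13 assms by auto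
qed

lemma antichain_indep: "antichain n S \<longleftrightarrow> indep n S"
proof
  assume a: "antichain n S"
  have sub: "S \<subseteq> {1..n}" using a antichain_def by blast
  have "\<not> (x \<noteq> y \<and> (xi_le n x y \<or> xi_le n y x))" if "x \<in> S" "y \<in> S" for x y
    using a that unfolding antichain_def by blast
  then show "indep n S" unfolding indep_def using sub comparable_iff
    by (metis n_not_Suc_n numeral_eq_iff semiring_norm(84) subsetD numeral_One)
next
  assume a: "indep n S"
  have sub: "S \<subseteq> {1..n}" using a indep_def by blast
  have "\<not> (x \<noteq> y \<and> (xi_le n x y \<or> xi_le n y x))" if "x \<in> S" "y \<in> S" for x y
    using comparable_iff[of x n y] that sub a unfolding indep_def by blast
  then show "antichain n S" unfolding antichain_def using sub by blast
qed

definition AA :: "nat \<Rightarrow> nat \<Rightarrow> nat" where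
  "AA n k = card {S. indep n S \<and> card S = k}"

lemma dminus_AA: "dminus n k = AA n k"
  unfolding AA_def dminus_antichain antichain_indep ..

lemma AA_1: "AA n 1 = n"
proof -
  have "{S. indep n S \<and> card S = 1} = (\<lambda>i. {i}) ` {1..n}"
    by (auto simp: indep_def card_1_singleton_iff)
  then show ?thesis unfolding AA_def by (simp add: card_image)
qed

lemma AA_small: assumes "n \<le> 3" "k \<ge> 2" shows "AA n k = 0"
proof -
  have e: "{S. indep n S \<and> card S = k} = {}"
  proof (rule ccontr)
    assume "{S. indep n S \<and> card S = k} \<noteq> {}"
    then obtain S where S: "indep n S" "card S = k" by blast
    then have "card S \<ge> 2" using assms by simp
    then obtain a b where ab: "a \<in> S" "b \<in> S" "a \<noteq> b"
      by (metis One_nat_def card_le_Suc_iff numeral_2_eq_2 insertCI)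
    have "a \<in> {1..3}" "b \<in> {1..3}" using S ab assms unfolding indep_def by auto
    then have abr: "a = 1 \<or> a = 2 \<or> a = 3" "b = 1 \<or> b = 2 \<or> b = 3" by auto
    have i: "\<forall>i. \<not> (i \<in> S \<and> Suc i \<in> S)" and c3: "\<not>(1\<in>S\<and>3\<in>S)" using S(1) indep_def by auto
    have c1: "\<not>(1\<in>S\<and>2\<in>S)" using spec[OF i, of 1] by (simp add: numeral_2_eq_2)
    have c2: "\<not>(2\<in>S\<and>3\<in>S)" using spec[OF i, of 2] by simp
    show False using ab abr c1 c2 c3 by fastforce
  qed
  show ?thesis unfolding AA_def e by simp
qed

lemma fin_indep: "finite {S. indep n S \<and> P S}"
  by (rule finite_subset[of _ "Pow {1..n}"]) (auto simp: indep_def)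

lemma AA_rec:
  assumes "n \<ge> 4" "k \<ge> 1"
  shows "AA n k = AA (n - 1) k + AA (n - 2) (k - 1)"
proof -
  let ?L = "{S. indep n S \<and> card S = k}"
  let ?P = "{S. indep (n - 1) S \<and> card S = k}"
  let ?Q = "{S. indep (n - 2) S \<and> card S = k - 1}"
  have eq: "?L = ?P \<union> insert n ` ?Q"
  proof
    show "?L \<subseteq> ?P \<union> insert n ` ?Q"
    proof
      fix S assume S: "S \<in> ?L"
      have sub: "S \<subseteq> {1..n}" and i: "\<forall>i. \<not> (i \<in> S \<and> Suc i \<in> S)" and c: "\<not> (1 \<in> S \<and> 3 \<in> S)"
        and cS: "card S = k"
        using S unfolding indep_def by auto
      show "S \<in> ?P \<union> insert n ` ?Q"
      proof (cases "n \<in> S")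
        case False
        have "S \<subseteq> {1..n-1}"
        proof
          fix x assume "x \<in> S"
          then have "x \<in> {1..n}" "x \<noteq> n" using sub False by auto
          then show "x \<in> {1..n-1}" by auto
        qed
        then have "indep (n - 1) S" using i c unfolding indep_def by blast
        then show ?thesis using cS by blast
      next
        case True
        have sn: "Suc (n - 1) = n" using assms by simp
        have nn: "n - 1 \<notin> S" using spec[OF i, of "n - 1"] True sn by simp
        have fS: "finite S" using sub by (auto intro: finite_subset)
        have "S - {n} \<subseteq> {1..n-2}"
        proof
          fix x assume "x \<in> S - {n}"
          then have "x \<in> {1..n}" "x \<noteq> n" "x \<noteq> n - 1" using sub nn by auto
          then show "x \<in> {1..n-2}" by auto
        qed
        then have "indep (n - 2) (S - {n})" using i c unfolding indep_def by blast
        moreover have "card (S - {n}) = k - 1" using cS True fS by simp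
        moreover have "S = insert n (S - {n})" using True by blast
        ultimately show ?thesis by blast
      qed
    qed
    show "?P \<union> insert n ` ?Q \<subseteq> ?L"
    proof
      fix S assume "S \<in> ?P \<union> insert n ` ?Q"
      then consider "S \<in> ?P" | T where "T \<in> ?Q" "S = insert n T" by blast
      then show "S \<in> ?L"
      proof cases
        case 1
        then have sub: "S \<subseteq> {1..n-1}" and i: "\<forall>i. \<not> (i \<in> S \<and> Suc i \<in> S)" and c: "\<not> (1 \<in> S \<and> 3 \<in> S)"
          and cS: "card S = k" unfolding indep_def by auto
        have "S \<subseteq> {1..n}" by (rule subset_trans[OF sub]) auto
        then show ?thesis using i c cS unfolding indep_def by blast
      next
        case 2
        then have sub: "T \<subseteq> {1..n-2}" and i: "\<forall>i. \<not> (i \<in> T \<and> Suc i \<in> T)" and c: "\<not> (1 \<in> T \<and> 3 \<in> T)"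
          and cT: "card T = k - 1" unfolding indep_def by auto
        have fT: "finite T" using sub by (auto intro: finite_subset)
        have bd: "x \<le> n - 2" if "x \<in> T" for x using sub that by auto
        have nT: "n \<notin> T" using bd[of n] assms by force
        have n1T: "n - 1 \<notin> T" using bd[of "n - 1"] assms by force
        have snT: "Suc n \<notin> T" using bd[of "Suc n"] assms by force
        have "card S = k" using 2 fT nT cT assms by simp
        moreover have "S \<subseteq> {1..n}"
        proof -
          have "T \<subseteq> {1..n}" by (rule subset_trans[OF sub]) auto
          then show ?thesis using 2 assms by auto
        qed
        moreover have "\<forall>i. \<not> (i \<in> S \<and> Suc i \<in> S)"
        proof (intro allI notI)
          fix j assume j: "j \<in> S \<and> Suc j \<in> S"
          show False
          proof (cases "j = n")
            case True then show False using j 2 snT by auto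
          next
            case False
            then have jT: "j \<in> T" using j 2 by auto
            show False
            proof (cases "Suc j = n")
              case True then have "j = n - 1" by simp
              then show False using jT n1T by simp
            next
              case False then have "Suc j \<in> T" using j 2 by auto
              then show False using jT i by blast
            qed
          qed
        qed
        moreover have "\<not> (1 \<in> S \<and> 3 \<in> S)" using c 2 assms by auto
        ultimately show ?thesis unfolding indep_def by blast
      qed
    qed
  qed
  have disj: "?P \<inter> insert n ` ?Q = {}" using assms unfolding indep_def by auto
  have inj: "inj_on (insert n) ?Q"
  proof (rule inj_onI)
    fix A B assume AB: "A \<in> ?Q" "B \<in> ?Q" "insert n A = insert n B"
    have "n \<notin> A" "n \<notin> B" using AB(1,2) assms unfolding indep_def by auto
    then show "A = B" using AB(3) by (metis insert_ident)
  qed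
  have "AA n k = card ?P + card (insert n ` ?Q)"
    unfolding AA_def eq by (rule card_Un_disjoint) (use disj fin_indep in auto)
  then show ?thesis unfolding AA_def using card_image[OF inj] by simp
qed



unbundle fps_syntax

definition ff :: "nat \<Rightarrow> rat fps" where
  "ff k = Abs_fps (\<lambda>n. of_nat (AA n k))"

lemma shift_nth: fixes f :: "rat fps" shows "(f * (1 - fps_X)) $ n = f $ n - (if n = 0 then 0 else f $ (n - 1))"
proof -
  have "f * (1 - fps_X) = f - f * fps_X" by (simp add: right_diff_distrib)
  then show ?thesis by simp
qed

lemma AA_1': "AA n (Suc 0) = n" using AA_1 by simp

lemma L1: "ff 1 * (1 - fps_X)^2 = fps_X"
proof -
  have a: "ff 1 * (1 - fps_X) = Abs_fps (\<lambda>n. if n = 0 then 0 else 1)"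
  proof (rule fps_ext)
    fix n show "(ff 1 * (1 - fps_X)) $ n = Abs_fps (\<lambda>n. if n = 0 then 0 else 1 :: rat) $ n"
      unfolding shift_nth by (cases n) (auto simp: ff_def AA_1')
  qed
  have "ff 1 * (1 - fps_X)^2 = (ff 1 * (1 - fps_X)) * (1 - fps_X)"
    by (simp add: power2_eq_square mult.assoc)
  also have "\<dots> = fps_X"
  proof (rule fps_ext)
    fix n show "(ff 1 * (1 - fps_X) * (1 - fps_X)) $ n = (fps_X :: rat fps) $ n"
      unfolding shift_nth a by (auto simp: fps_X_def)
  qed
  finally show ?thesis .
qed

lemma AA_0: "k \<ge> 1 \<Longrightarrow> AA 0 k = 0"
  using AA_1[of 0] AA_small[of 0 k] by (cases "k = 1") auto

lemma L2:
  assumes "k \<ge> 2"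
  shows "ff k * (1 - fps_X) = fps_X^2 * ff (k - 1) - (if k = 2 then fps_X^3 else 0)"
proof (rule fps_ext)
  fix n
  have lhs: "(ff k * (1 - fps_X)) $ n = of_nat (AA n k) - (if n = 0 then 0 else of_nat (AA (n - 1) k))"
    unfolding shift_nth by (simp add: ff_def)
  have rhs: "(fps_X^2 * ff (k - 1) - (if k = 2 then fps_X^3 else 0)) $ n
     = (if n < 2 then 0 else of_nat (AA (n - 2) (k - 1))) - (if k = 2 \<and> n = 3 then 1 else 0)"
    by (auto simp: fps_X_power_mult_nth ff_def fps_X_power_nth)
  show "(ff k * (1 - fps_X)) $ n = (fps_X^2 * ff (k - 1) - (if k = 2 then fps_X^3 else 0)) $ n"
    unfolding lhs rhs
  proof (cases "n \<ge> 4")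
    case True
    then have "AA n k = AA (n - 1) k + AA (n - 2) (k - 1)" using AA_rec assms by simp
    then show "of_nat (AA n k) - (if n = 0 then 0 else of_nat (AA (n - 1) k)) =
      (if n < 2 then 0 else of_nat (AA (n - 2) (k - 1))) - (if k = 2 \<and> n = 3 then 1 else (0::rat))"
      using True by simp
  next
    case False
    then have z: "AA n k = 0" "AA (n - 1) k = 0" using AA_small assms by auto
    have "n = 0 \<or> n = 1 \<or> n = 2 \<or> n = 3" using False by auto
    moreover have "AA 0 (k - 1) = 0" using AA_0 assms by simp
    moreover have "AA 1 (k - 1) = (if k = 2 then 1 else 0)"
      using AA_1[of 1] AA_small[of 1 "k - 1"] assms by (cases "k = 2") auto
    ultimately show "of_nat (AA n k) - (if n = 0 then 0 else of_nat (AA (n - 1) k)) =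
      (if n < 2 then 0 else of_nat (AA (n - 2) (k - 1))) - (if k = 2 \<and> n = 3 then 1 else (0::rat))"
      using z by auto
  qed
qed

lemma e1g: "(x::'a::comm_ring_1)^2*(2-x) + x*(1-x)^2 = x" by (simp add: algebra_simps power2_eq_square)
lemma e2g: "(x::'a::comm_ring_1)^2*(x^2*(2-x) + x*(1-x)^2) - x^3*(1-x)^2 = x^4*(2-x)"
  by (simp add: algebra_simps power2_eq_square power3_eq_cube power4_eq_xxxx)

lemma e1: "fps_X^2*(2 - fps_X) + fps_X*(1-fps_X)^2 = (fps_X :: rat fps)"
  by (rule e1g)

lemma e2: "fps_X^2*(fps_X^2*(2-fps_X) + fps_X*(1-fps_X)^2) - fps_X^3*(1-fps_X)^2 = (fps_X^4*(2-fps_X) :: rat fps)"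
  by (rule e2g)

lemma L3: "k \<ge> 1 \<Longrightarrow> ff k * (1 - fps_X)^(k+1) = fps_X^(2*k) * (2 - fps_X) + (if k = 1 then fps_X * (1 - fps_X)^(k+1) else 0)"
proof (induction k)
  case 0 then show ?case by simp
next
  case (Suc k)
  show ?case
  proof (cases "k = 0")
    case True
    then show ?thesis using L1 e1 by (simp add: power2_eq_square)
  next
    case False
    then have IH: "ff k * (1 - fps_X)^(k+1) = fps_X^(2*k) * (2 - fps_X) + (if k = 1 then fps_X * (1 - fps_X)^(k+1) else 0)"
      using Suc by simp
    have "ff (Suc k) * (1 - fps_X)^(Suc k + 1) = (ff (Suc k) * (1 - fps_X)) * (1 - fps_X)^(k+1)"
      by (simp add: algebra_simps)
    also have "\<dots> = (fps_X^2 * ff k - (if k = 1 then fps_X^3 else 0)) * (1 - fps_X)^(k+1)"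
      using L2[of "Suc k"] False by simp
    also have "\<dots> = fps_X^2 * (ff k * (1 - fps_X)^(k+1)) - (if k = 1 then fps_X^3 * (1 - fps_X)^(k+1) else 0)"
      by (simp add: algebra_simps)
    also have "\<dots> = fps_X^(2 * Suc k) * (2 - fps_X)"
    proof (cases "k = 1")
      case True
      then show ?thesis unfolding IH using e2 by (simp add: power2_eq_square)
    next
      case False
      then show ?thesis unfolding IH by (simp add: power_add mult.assoc power2_eq_square)
    qed
    finally show ?thesis using False by simp
  qed
qed

theorem mainTheorem20:
  fixes k :: nat
  assumes "k \<ge> 1"
  shows "Abs_fps (\<lambda>n. of_nat (dminus n k) :: rat) =
         fps_X ^ (2 * k) * (2 - fps_X) / (1 - fps_X) ^ (k + 1)
         + (if k = 1 then fps_X else 0)"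
proof -
  define u :: "rat fps" where "u = (1 - fps_X) ^ (k + 1)"
  have u0: "u $ 0 \<noteq> 0" unfolding u_def by (simp add: fps_nth_power_0)
  have ui: "u * inverse u = 1" using inverse_mult_eq_1'[OF u0] .
  have lhs: "Abs_fps (\<lambda>n. of_nat (dminus n k) :: rat) = ff k"
    unfolding ff_def dminus_AA ..
  have "ff k = ff k * u * inverse u" using ui by (simp add: mult.assoc)
  also have "ff k * u = fps_X^(2*k) * (2 - fps_X) + (if k = 1 then fps_X * u else 0)"
    using L3[OF assms] unfolding u_def by simp
  also have "(fps_X^(2*k) * (2 - fps_X) + (if k = 1 then fps_X * u else 0)) * inverse u
     = fps_X^(2*k) * (2 - fps_X) * inverse u + (if k = 1 then fps_X else 0)"
    using ui by (simp add: algebra_simps)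
  also have "fps_X^(2*k) * (2 - fps_X) * inverse u = fps_X^(2*k) * (2 - fps_X) / u"
    using fps_divide_unit[OF u0] by simp
  finally show ?thesis unfolding lhs u_def .
qed

end
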